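(* Let $F$ be a field of characteristic zero and let $Q$ be a finite quiver with vertex set $Q_0=\{1,\dots,n\}$ such that the path algebra $FQ$ is a PI algebra. Let $\pi$ be an arbitrary set of paths in $Q$, let $FQ_\pi$ be the subalgebra of $FQ$ generated by $\pi$, and let \[A_\pi=\{A\in M_n(F)\mid A_{i,j}=0 \text{ whenever there is no path in } \tilde{\pi} \text{ from } i \text{ to } j\},\] where $\tilde\pi$ is the set of all paths of $Q$ that are (nonzero) products of elements of $\pi$. Then $\mathrm{Id}(FQ_\pi)=\mathrm{Id}(A_\pi)$.
   Context: A path of length $\ell$ in $Q$ is a concatenation of $\ell$ composable arrows; $s(p)$ and $t(p)$ denote the starting and terminal vertices of a path $p$; for each vertex $i$ there is a length-zero path $e_i$ with $s(e_i)=t(e_i)=i$. The path algebra $FQ$ is the $F$-vector space with basis all paths of $Q$, with product of paths $p,q$ equal to the concatenation $pq$ if $t(p)=s(q)$ and $0$ otherwise. For a set $\pi$ of paths, $FQ_\pi$ is the (not necessarily unital) subalgebra of $FQ$ generated by $\pi$, i.e. the linear span of $\tilde\pi$. $M_n(F)$ is the algebra of $n\times n$ matrices over $F$; equivalently $A_\pi$ is the linear span of the elementary matrices $e_{s(p)t(p)}$, $p\in\tilde\pi$. For an $F$-algebra $A$, $\mathrm{Id}(A)$ denotes the T-ideal of the free associative algebra $F\langle X\rangle$ on countably many variables consisting of all polynomial identities satisfied by $A$; $A$ is PI if $\mathrm{Id}(A)\neq\{0\}$. *)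

theory Defs
  imports Main "Jordan_Normal_Form.Matrix"
begin

text \<open>A finite quiver with vertex set {0..<n} (the paper's {1..n}, shifted),
  arrow set E (of an arbitrary type 'a), source map s and target map t.
  A path is a pair (i, as): starting vertex i and the list of arrows as
  (composed left to right); (i, []) is the trivial path e_i.\<close>

type_synonym 'a path = "nat \<times> 'a list"

definition quiver :: "nat \<Rightarrow> 'a set \<Rightarrow> ('a \<Rightarrow> nat) \<Rightarrow> ('a \<Rightarrow> nat) \<Rightarrow> bool" where
  "quiver n E s t \<longleftrightarrow> finite E \<and> (\<forall>e\<in>E. s e < n \<and> t e < n)"

definition is_path :: "nat \<Rightarrow> 'a set \<Rightarrow> ('a \<Rightarrow> nat) \<Rightarrow> ('a \<Rightarrow> nat) \<Rightarrow> 'a path \<Rightarrow> bool" where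
  "is_path n E s t p \<longleftrightarrow> fst p < n \<and> set (snd p) \<subseteq> E \<and>
     (snd p \<noteq> [] \<longrightarrow> s (hd (snd p)) = fst p) \<and>
     (\<forall>k. Suc k < length (snd p) \<longrightarrow> t (snd p ! k) = s (snd p ! Suc k))"

definition pstart :: "'a path \<Rightarrow> nat" where
  "pstart p = fst p"

definition pend :: "('a \<Rightarrow> nat) \<Rightarrow> 'a path \<Rightarrow> nat" where
  "pend t p = (if snd p = [] then fst p else t (last (snd p)))"

text \<open>Concatenation pq (only meaningful when pend p = pstart q).\<close>
definition pconcat :: "'a path \<Rightarrow> 'a path \<Rightarrow> 'a path" where
  "pconcat p q = (fst p, snd p @ snd q)"

inductive_set path_closure :: "('a \<Rightarrow> nat) \<Rightarrow> 'a path set \<Rightarrow> 'a path set"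
  for t :: "'a \<Rightarrow> nat" and \<pi> :: "'a path set" where
  base: "p \<in> \<pi> \<Longrightarrow> p \<in> path_closure t \<pi>"
| step: "p \<in> path_closure t \<pi> \<Longrightarrow> q \<in> \<pi> \<Longrightarrow> pend t p = pstart q \<Longrightarrow>
         pconcat p q \<in> path_closure t \<pi>"

definition path_algebra :: "nat \<Rightarrow> 'a set \<Rightarrow> ('a \<Rightarrow> nat) \<Rightarrow> ('a \<Rightarrow> nat) \<Rightarrow> ('a path \<Rightarrow> 'f::field) set" where
  "path_algebra n E s t = {x. finite {p. x p \<noteq> 0} \<and> (\<forall>p. x p \<noteq> 0 \<longrightarrow> is_path n E s t p)}"

text \<open>Product in FQ: (xy)(r) = sum over all factorizations r = pq (as a concatenation).\<close>
definition pa_mult :: "('a \<Rightarrow> nat) \<Rightarrow> ('a path \<Rightarrow> 'f::field) \<Rightarrow> ('a path \<Rightarrow> 'f) \<Rightarrow> 'a path \<Rightarrow> 'f" where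
  "pa_mult t x y r = (\<Sum>k\<in>{0..length (snd r)}.
      x (fst r, take k (snd r)) * y (pend t (fst r, take k (snd r)), drop k (snd r)))"

definition pa_one :: "nat \<Rightarrow> 'a path \<Rightarrow> 'f::field" where
  "pa_one n p = (if snd p = [] \<and> fst p < n then 1 else 0)"

text \<open>FQ_\<pi> = linear span of \<pi>~.\<close>
definition FQ_pi :: "nat \<Rightarrow> 'a set \<Rightarrow> ('a \<Rightarrow> nat) \<Rightarrow> ('a \<Rightarrow> nat) \<Rightarrow> 'a path set \<Rightarrow> ('a path \<Rightarrow> 'f::field) set" where
  "FQ_pi n E s t \<pi> = {x \<in> path_algebra n E s t. \<forall>p. x p \<noteq> 0 \<longrightarrow> p \<in> path_closure t \<pi>}"

definition A_pi :: "nat \<Rightarrow> ('a \<Rightarrow> nat) \<Rightarrow> 'a path set \<Rightarrow> 'f::field mat set" where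
  "A_pi n t \<pi> = {A \<in> carrier_mat n n. \<forall>i<n. \<forall>j<n.
      (\<not> (\<exists>p\<in>path_closure t \<pi>. pstart p = i \<and> pend t p = j)) \<longrightarrow> A $$ (i, j) = 0}"

text \<open>F<X>, X = {x_0, x_1, ...}: finitely supported functions from words
  (lists of variable indices) to F.\<close>
definition free_alg :: "(nat list \<Rightarrow> 'f::field) set" where
  "free_alg = {f. finite {w. f w \<noteq> 0}}"

text \<open>Evaluation in FQ (inside the unital ambient algebra FQ).\<close>
definition pa_eval :: "nat \<Rightarrow> ('a \<Rightarrow> nat) \<Rightarrow> (nat list \<Rightarrow> 'f::field) \<Rightarrow> (nat \<Rightarrow> 'a path \<Rightarrow> 'f) \<Rightarrow> 'a path \<Rightarrow> 'f" where
  "pa_eval n t f xs = (\<lambda>r. \<Sum>w\<in>{w. f w \<noteq> 0}. f w * foldr (pa_mult t) (map xs w) (pa_one n) r)"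

definition mat_eval :: "nat \<Rightarrow> (nat list \<Rightarrow> 'f::field) \<Rightarrow> (nat \<Rightarrow> 'f mat) \<Rightarrow> 'f mat" where
  "mat_eval n f xs = mat n n (\<lambda>(i, j). \<Sum>w\<in>{w. f w \<noteq> 0}. f w * (foldr (*) (map xs w) (1\<^sub>m n)) $$ (i, j))"

definition Id_pa :: "nat \<Rightarrow> ('a \<Rightarrow> nat) \<Rightarrow> ('a path \<Rightarrow> 'f::field) set \<Rightarrow> (nat list \<Rightarrow> 'f) set" where
  "Id_pa n t B = {f \<in> free_alg. \<forall>xs. (\<forall>k. xs k \<in> B) \<longrightarrow> pa_eval n t f xs = (\<lambda>_. 0)}"

definition Id_mat :: "nat \<Rightarrow> 'f::field mat set \<Rightarrow> (nat list \<Rightarrow> 'f) set" where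
  "Id_mat n B = {f \<in> free_alg. \<forall>xs. (\<forall>k. xs k \<in> B) \<longrightarrow> mat_eval n f xs = 0\<^sub>m n n}"

end

theory Submission imports Defs "HOL-Computational_Algebra.Polynomial" "HOL-Library.Multiset" begin

lemma is_path_alt:
  "is_path n E s t (i, xs) \<longleftrightarrow> i < n \<and> set xs \<subseteq> E \<and> (xs \<noteq> [] \<longrightarrow> s (hd xs) = i) \<and>
     successively (\<lambda>a b. t a = s b) xs"
  unfolding is_path_def by (auto simp: successively_conv_nth)

lemma pend_simp: "pend t (i, xs) = (if xs = [] then i else t (last xs))"
  by (simp add: pend_def)

lemma is_path_append:
  assumes "is_path n E s t (i, xs)" "is_path n E s t (pend t (i, xs), ys)"
  shows "is_path n E s t (i, xs @ ys)"
  using assms unfolding is_path_alt pend_simp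
  by (auto simp: successively_append_iff split: if_splits)

lemma pend_append: "pend t (i, xs @ ys) = pend t (pend t (i, xs), ys)"
  by (simp add: pend_simp)

lemma is_path_prefix:
  assumes "is_path n E s t (i, xs @ ys)"
  shows "is_path n E s t (i, xs)"
  using assms unfolding is_path_alt
  by (auto simp: successively_append_iff)

lemma is_path_suffix:
  assumes "is_path n E s t (i, xs @ ys)" "quiver n E s t"
  shows "is_path n E s t (pend t (i, xs), ys)"
  using assms unfolding is_path_alt pend_simp quiver_def
  by (cases ys) (auto simp: successively_append_iff dest!: last_in_set)

lemma is_path_link:
  assumes "is_path n E s t (i, xs @ a # ys)"
  shows "pend t (i, xs) = s a"
  using assms unfolding is_path_alt pend_simp
  by (auto simp: successively_append_iff)

lemma pend_lt:
  assumes "is_path n E s t p" "quiver n E s t"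
  shows "pend t p < n"
  using assms unfolding is_path_def pend_def quiver_def
  by (auto dest!: last_in_set)


definition supp :: "('b \<Rightarrow> 'f::zero) \<Rightarrow> 'b set" where "supp x = {p. x p \<noteq> 0}"

lemma pa_mult_pairs:
  fixes x y :: "'a path \<Rightarrow> 'f::field"
  assumes "finite (supp x)" "finite (supp y)"
  shows "pa_mult t x y r = (\<Sum>z \<in> {z \<in> supp x \<times> supp y. pend t (fst z) = fst (snd z) \<and> pconcat (fst z) (snd z) = r}.
            x (fst z) * y (snd z))"
proof -
  define P where "P k = (fst r, take k (snd r))" for k
  define Q where "Q k = (pend t (P k), drop k (snd r))" for k
  define K where "K = {k \<in> {0..length (snd r)}. x (P k) \<noteq> 0 \<and> y (Q k) \<noteq> 0}"
  have "pa_mult t x y r = (\<Sum>k\<in>{0..length (snd r)}. x (P k) * y (Q k))"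
    unfolding pa_mult_def P_def Q_def by simp
  also have "\<dots> = (\<Sum>k\<in>K. x (P k) * y (Q k))"
    by (rule sum.mono_neutral_right) (auto simp: K_def)
  also have "\<dots> = (\<Sum>z \<in> (\<lambda>k. (P k, Q k)) ` K. x (fst z) * y (snd z))"
  proof (subst sum.reindex)
    show "inj_on (\<lambda>k. (P k, Q k)) K"
      proof (rule inj_onI)
      fix a b assume "a \<in> K" "b \<in> K" "(P a, Q a) = (P b, Q b)"
      then have "take a (snd r) = take b (snd r)" "a \<le> length (snd r)" "b \<le> length (snd r)" by (auto simp: K_def P_def)
      then show "a = b" by (metis length_take min.absorb2)
    qed
  qed simp
  also have "(\<lambda>k. (P k, Q k)) ` K = {z \<in> supp x \<times> supp y. pend t (fst z) = fst (snd z) \<and> pconcat (fst z) (snd z) = r}"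
  proof (intro equalityI subsetI)
    fix z assume "z \<in> (\<lambda>k. (P k, Q k)) ` K"
    then show "z \<in> {z \<in> supp x \<times> supp y. pend t (fst z) = fst (snd z) \<and> pconcat (fst z) (snd z) = r}"
      by (auto simp: K_def supp_def P_def Q_def pconcat_def)
  next
    fix z assume z: "z \<in> {z \<in> supp x \<times> supp y. pend t (fst z) = fst (snd z) \<and> pconcat (fst z) (snd z) = r}"
    obtain p q where zpq: "z = (p, q)" by (cases z)
    define k where "k = length (snd p)"
    have r: "r = (fst p, snd p @ snd q)" using z zpq by (auto simp: pconcat_def)
    have Pk: "P k = p" by (simp add: P_def r k_def)
    have Qk: "Q k = q" unfolding Q_def Pk using z zpq by (cases q) (auto simp: r k_def)
    have "k \<in> K" using z zpq Pk Qk by (auto simp: K_def supp_def r k_def)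
    then show "z \<in> (\<lambda>k. (P k, Q k)) ` K" using zpq Pk Qk by force
  qed
  finally show ?thesis .
qed


definition phi :: "nat \<Rightarrow> ('a \<Rightarrow> nat) \<Rightarrow> ('a list \<Rightarrow> 'f::field) \<Rightarrow> ('a path \<Rightarrow> 'f) \<Rightarrow> 'f mat" where
  "phi n t G x = mat n n (\<lambda>(i, j). \<Sum>p\<in>supp x. if fst p = i \<and> pend t p = j then x p * G (snd p) else 0)"

lemma phi_dim[simp]: "dim_row (phi n t G x) = n" "dim_col (phi n t G x) = n" "phi n t G x \<in> carrier_mat n n"
  by (auto simp: phi_def)

lemma phi_entry:
  assumes "finite S" "supp x \<subseteq> S" "i < n" "j < n"
  shows "phi n t G x $$ (i, j) = (\<Sum>p\<in>S. if fst p = i \<and> pend t p = j then x p * G (snd p) else 0)"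
proof -
  have "phi n t G x $$ (i, j) = (\<Sum>p\<in>supp x. if fst p = i \<and> pend t p = j then x p * G (snd p) else 0)"
    using assms by (simp add: phi_def)
  also have "\<dots> = (\<Sum>p\<in>S. if fst p = i \<and> pend t p = j then x p * G (snd p) else 0)"
    by (rule sum.mono_neutral_left) (use assms in \<open>auto simp: supp_def\<close>)
  finally show ?thesis .
qed

lemma pa_memD:
  assumes "x \<in> path_algebra n E s t"
  shows "finite (supp x)" "p \<in> supp x \<Longrightarrow> is_path n E s t p"
  using assms by (auto simp: path_algebra_def supp_def) (cases p, auto)

lemma pa_memI:
  assumes "finite (supp x)" "\<And>p. p \<in> supp x \<Longrightarrow> is_path n E s t p"
  shows "x \<in> path_algebra n E s t"
  using assms by (auto simp: path_algebra_def supp_def)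

definition cc :: "'a path \<times> 'a path \<Rightarrow> 'a path" where "cc z = pconcat (fst z) (snd z)"

definition ZZ :: "('a \<Rightarrow> nat) \<Rightarrow> 'a path set \<Rightarrow> 'a path set \<Rightarrow> ('a path \<times> 'a path) set" where
  "ZZ t A B = {z \<in> A \<times> B. pend t (fst z) = fst (snd z)}"

lemma supp_mult:
  fixes x y :: "'a path \<Rightarrow> 'f::field"
  assumes "finite (supp x)" "finite (supp y)"
  shows "supp (pa_mult t x y) \<subseteq> cc ` ZZ t (supp x) (supp y)"
proof
  fix r assume "r \<in> supp (pa_mult t x y)"
  then have "pa_mult t x y r \<noteq> 0" by (simp add: supp_def)
  then have "{z \<in> supp x \<times> supp y. pend t (fst z) = fst (snd z) \<and> pconcat (fst z) (snd z) = r} \<noteq> {}"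
    unfolding pa_mult_pairs[OF assms] by (metis sum.empty)
  then show "r \<in> cc ` ZZ t (supp x) (supp y)" by (force simp: cc_def ZZ_def)
qed

lemma mult_closed:
  assumes q: "quiver n E s t" and x: "x \<in> path_algebra n E s t" and y: "y \<in> path_algebra n E s t"
  shows "pa_mult t x y \<in> path_algebra n E s t"
proof (rule pa_memI)
  have fx: "finite (supp x)" and fy: "finite (supp y)" using pa_memD x y by blast+
  show "finite (supp (pa_mult t x y))"
    by (rule finite_subset[OF supp_mult[OF fx fy]]) (auto simp: ZZ_def intro!: finite_imageI finite_cartesian_product fx fy)
  fix r assume "r \<in> supp (pa_mult t x y)"
  then obtain p qq where pq: "p \<in> supp x" "qq \<in> supp y" "pend t p = fst qq" "r = pconcat p qq"
    using supp_mult[OF fx fy] by (force simp: cc_def ZZ_def)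
  have "is_path n E s t p" "is_path n E s t qq" using pq pa_memD x y by blast+
  then show "is_path n E s t r" using pq is_path_append[of n E s t "fst p" "snd p" "snd qq"]
    by (cases p, cases qq) (auto simp: pconcat_def)
qed

lemma supp_one: "supp (pa_one n :: 'a path \<Rightarrow> 'f::field) = (\<lambda>v. (v, [])) ` {..<n}"
  by (auto simp: supp_def pa_one_def)

lemma one_closed: "(pa_one n :: 'a path \<Rightarrow> 'f::field) \<in> path_algebra n E s t"
  by (rule pa_memI) (auto simp: supp_one is_path_def)

definition multG :: "('a list \<Rightarrow> 'f::field) \<Rightarrow> bool" where
  "multG G \<longleftrightarrow> G [] = 1 \<and> (\<forall>xs ys. G (xs @ ys) = G xs * G ys)"

lemma phi_one:
  assumes "multG G"
  shows "phi n t G (pa_one n :: 'a path \<Rightarrow> 'f::field) = 1\<^sub>m n"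
proof (rule eq_matI)
  fix i j assume ij: "i < dim_row (1\<^sub>m n :: 'f mat)" "j < dim_col (1\<^sub>m n :: 'f mat)"
  have "phi n t G (pa_one n :: 'a path \<Rightarrow> 'f) $$ (i, j) =
     (\<Sum>p\<in>(\<lambda>v. (v, [])) ` {..<n}. if fst p = i \<and> pend t p = j then (pa_one n p :: 'f) * G (snd p) else 0)"
    using ij by (simp add: phi_def supp_one)
  also have "\<dots> = (\<Sum>v\<in>{..<n}. if v = i \<and> v = j then 1 else 0)"
    by (subst sum.reindex) (use assms in \<open>auto simp: inj_on_def pend_def pa_one_def multG_def intro!: sum.cong\<close>)
  also have "\<dots> = (1\<^sub>m n :: 'f mat) $$ (i, j)" using ij by (cases "i = j") (auto intro!: sum.neutral)
  finally show "phi n t G (pa_one n :: 'a path \<Rightarrow> 'f) $$ (i, j) = (1\<^sub>m n :: 'f mat) $$ (i, j)" .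
qed auto

lemma phi_mult:
  fixes x y :: "'a path \<Rightarrow> 'f::field"
  assumes q: "quiver n E s t" and x: "x \<in> path_algebra n E s t" and y: "y \<in> path_algebra n E s t"
    and G: "multG G"
  shows "phi n t G (pa_mult t x y) = phi n t G x * phi n t G y"
proof (rule eq_matI)
  fix i j assume "i < dim_row (phi n t G x * phi n t G y)" "j < dim_col (phi n t G x * phi n t G y)"
  then have ij: "i < n" "j < n" by auto
  have fx: "finite (supp x)" and fy: "finite (supp y)" using pa_memD x y by blast+
  define Z where "Z = ZZ t (supp x) (supp y)"
  have fZ: "finite Z" unfolding Z_def ZZ_def using fx fy by auto
  have pathx: "\<And>p. p \<in> supp x \<Longrightarrow> is_path n E s t p" using pa_memD x by blast
  define H where "H z = (if fst (fst z) = i \<and> pend t (snd z) = j then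
      x (fst z) * G (snd (fst z)) * (y (snd z) * G (snd (snd z))) else 0)" for z
  have "phi n t G (pa_mult t x y) $$ (i, j) =
     (\<Sum>r\<in>cc ` Z. if fst r = i \<and> pend t r = j then pa_mult t x y r * G (snd r) else 0)"
    by (rule phi_entry) (use supp_mult[OF fx fy] fZ ij in \<open>auto simp: Z_def\<close>)
  also have "\<dots> = (\<Sum>r\<in>cc ` Z. \<Sum>z\<in>{z\<in>Z. cc z = r}. H z)"
  proof (rule sum.cong[OF refl])
    fix r assume "r \<in> cc ` Z"
    have e: "{z \<in> supp x \<times> supp y. pend t (fst z) = fst (snd z) \<and> pconcat (fst z) (snd z) = r} = {z\<in>Z. cc z = r}"
      by (auto simp: Z_def ZZ_def cc_def)
    have "\<And>z. z \<in> {z\<in>Z. cc z = r} \<Longrightarrow> fst r = fst (fst z) \<and> pend t r = pend t (snd z) \<and>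
           G (snd r) = G (snd (fst z)) * G (snd (snd z))"
      using G by (auto simp: Z_def ZZ_def cc_def pconcat_def multG_def pend_def)
    then show "(if fst r = i \<and> pend t r = j then pa_mult t x y r * G (snd r) else 0) = (\<Sum>z\<in>{z\<in>Z. cc z = r}. H z)"
      unfolding pa_mult_pairs[OF fx fy] e H_def
      by (auto simp: sum_distrib_right intro!: sum.cong sum.neutral)
  qed
  also have "\<dots> = (\<Sum>z\<in>Z. H z)"
    by (rule sum.group) (use fZ in auto)
  also have "\<dots> = (\<Sum>z\<in>supp x \<times> supp y. if pend t (fst z) = fst (snd z) then H z else 0)"
    by (rule sum.mono_neutral_cong_left) (use fx fy in \<open>auto simp: Z_def ZZ_def\<close>)
  also have "\<dots> = (\<Sum>p\<in>supp x. \<Sum>qq\<in>supp y. if pend t p = fst qq then H (p, qq) else 0)"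
  proof -
    have "(\<Sum>z\<in>supp x \<times> supp y. if pend t (fst z) = fst (snd z) then H z else 0) =
      (\<Sum>(p,qq)\<in>supp x \<times> supp y. if pend t p = fst qq then H (p, qq) else 0)"
      by (intro sum.cong refl) (simp split: prod.split)
    then show ?thesis by (simp only: sum.cartesian_product)
  qed
  also have "\<dots> = (\<Sum>p\<in>supp x. \<Sum>qq\<in>supp y. \<Sum>k\<in>{0..<n}.
      (if fst p = i \<and> pend t p = k then x p * G (snd p) else 0) *
      (if fst qq = k \<and> pend t qq = j then y qq * G (snd qq) else 0))"
  proof (intro sum.cong refl)
    fix p qq assume p: "p \<in> supp x" "qq \<in> supp y"
    have pk: "pend t p < n" using pend_lt[OF pathx[OF p(1)] q] .
    show "(if pend t p = fst qq then H (p, qq) else 0) = (\<Sum>k\<in>{0..<n}.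
      (if fst p = i \<and> pend t p = k then x p * G (snd p) else 0) *
      (if fst qq = k \<and> pend t qq = j then y qq * G (snd qq) else 0))"
    proof -
      have "(\<Sum>k\<in>{0..<n}.
      (if fst p = i \<and> pend t p = k then x p * G (snd p) else 0) *
      (if fst qq = k \<and> pend t qq = j then y qq * G (snd qq) else 0)) =
        (\<Sum>k\<in>{0..<n}. if k = pend t p then (if fst p = i \<and> fst qq = pend t p \<and> pend t qq = j then
           x p * G (snd p) * (y qq * G (snd qq)) else 0) else 0)"
        by (rule sum.cong) auto
      also have "\<dots> = (if fst p = i \<and> fst qq = pend t p \<and> pend t qq = j then
           x p * G (snd p) * (y qq * G (snd qq)) else 0)"
        using pk by (subst sum.delta) auto
      finally show ?thesis by (auto simp: H_def)
    qed
  qed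
  also have "\<dots> = (\<Sum>k\<in>{0..<n}. (\<Sum>p\<in>supp x. if fst p = i \<and> pend t p = k then x p * G (snd p) else 0) *
      (\<Sum>qq\<in>supp y. if fst qq = k \<and> pend t qq = j then y qq * G (snd qq) else 0))"
  proof -
    let ?a = "\<lambda>p k. (if fst p = i \<and> pend t p = k then x p * G (snd p) else 0)"
    let ?b = "\<lambda>qq k. (if fst qq = k \<and> pend t qq = j then y qq * G (snd qq) else 0)"
    have "(\<Sum>p\<in>supp x. \<Sum>qq\<in>supp y. \<Sum>k\<in>{0..<n}. ?a p k * ?b qq k) =
          (\<Sum>p\<in>supp x. \<Sum>k\<in>{0..<n}. \<Sum>qq\<in>supp y. ?a p k * ?b qq k)"
      by (rule sum.cong[OF refl], rule sum.swap)
    also have "\<dots> = (\<Sum>k\<in>{0..<n}. \<Sum>p\<in>supp x. \<Sum>qq\<in>supp y. ?a p k * ?b qq k)"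
      by (rule sum.swap)
    also have "\<dots> = (\<Sum>k\<in>{0..<n}. (\<Sum>p\<in>supp x. ?a p k) * (\<Sum>qq\<in>supp y. ?b qq k))"
      by (simp only: sum_product)
    finally show ?thesis .
  qed
  also have "\<dots> = (phi n t G x * phi n t G y) $$ (i, j)"
    using ij by (simp add: phi_def scalar_prod_def)
  finally show "phi n t G (pa_mult t x y) $$ (i, j) = (phi n t G x * phi n t G y) $$ (i, j)" .
qed auto


lemma foldr_closed_phi:
  fixes X :: "nat \<Rightarrow> 'a path \<Rightarrow> 'f::field"
  assumes q: "quiver n E s t" and G: "multG G" and X: "\<forall>k. X k \<in> path_algebra n E s t"
  shows "foldr (pa_mult t) (map X w) (pa_one n) \<in> path_algebra n E s t \<and>
    phi n t G (foldr (pa_mult t) (map X w) (pa_one n)) = foldr (*) (map (\<lambda>k. phi n t G (X k)) w) (1\<^sub>m n)"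
proof (induction w)
  case Nil
  then show ?case using one_closed phi_one[OF G] by simp
next
  case (Cons k w)
  have Xk: "X k \<in> path_algebra n E s t" using X by blast
  show ?case using Cons.IH mult_closed[OF q Xk] phi_mult[OF q Xk _ G] by simp
qed

lemma pa_eval_closed_phi:
  fixes X :: "nat \<Rightarrow> 'a path \<Rightarrow> 'f::field"
  assumes q: "quiver n E s t" and G: "multG G" and X: "\<forall>k. X k \<in> path_algebra n E s t"
    and f: "f \<in> free_alg"
  shows "pa_eval n t f X \<in> path_algebra n E s t \<and>
    phi n t G (pa_eval n t f X) = mat_eval n f (\<lambda>k. phi n t G (X k))"
proof -
  define W where "W = {w. f w \<noteq> 0}"
  have fW: "finite W" using f by (simp add: W_def free_alg_def)
  define M where "M w = foldr (pa_mult t) (map X w) (pa_one n)" for w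
  have MP: "M w \<in> path_algebra n E s t" for w using foldr_closed_phi[OF q G X] by (simp add: M_def)
  have Mphi: "phi n t G (M w) = foldr (*) (map (\<lambda>k. phi n t G (X k)) w) (1\<^sub>m n)" for w
    using foldr_closed_phi[OF q G X] by (simp add: M_def)
  define S where "S = (\<Union>w\<in>W. supp (M w))"
  have fS: "finite S" unfolding S_def using fW pa_memD(1)[OF MP] by blast
  have ev: "pa_eval n t f X = (\<lambda>r. \<Sum>w\<in>W. f w * M w r)"
    by (simp add: pa_eval_def W_def M_def)
  have suppS: "supp (pa_eval n t f X) \<subseteq> S"
  proof
    fix r assume "r \<in> supp (pa_eval n t f X)"
    then have "(\<Sum>w\<in>W. f w * M w r) \<noteq> 0" by (simp add: ev supp_def)
    then obtain w where "w \<in> W" "M w r \<noteq> 0" by (metis (no_types, lifting) mult_zero_right sum.neutral)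
    then show "r \<in> S" by (auto simp: S_def supp_def)
  qed
  have closed: "pa_eval n t f X \<in> path_algebra n E s t"
  proof (rule pa_memI)
    show "finite (supp (pa_eval n t f X))" using finite_subset[OF suppS fS] .
    fix r assume "r \<in> supp (pa_eval n t f X)"
    then have "r \<in> S" using suppS by blast
    then show "is_path n E s t r" unfolding S_def using pa_memD(2)[OF MP] by blast
  qed
  have "phi n t G (pa_eval n t f X) = mat_eval n f (\<lambda>k. phi n t G (X k))"
  proof (rule eq_matI)
    fix i j assume "i < dim_row (mat_eval n f (\<lambda>k. phi n t G (X k)))" "j < dim_col (mat_eval n f (\<lambda>k. phi n t G (X k)))"
    then have ij: "i < n" "j < n" by (auto simp: mat_eval_def)
    have "phi n t G (pa_eval n t f X) $$ (i, j) =
        (\<Sum>r\<in>S. if fst r = i \<and> pend t r = j then pa_eval n t f X r * G (snd r) else 0)"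
      by (rule phi_entry[OF fS suppS ij])
    also have "\<dots> = (\<Sum>r\<in>S. \<Sum>w\<in>W. f w * (if fst r = i \<and> pend t r = j then M w r * G (snd r) else 0))"
      by (rule sum.cong[OF refl]) (auto simp: ev sum_distrib_right mult.assoc)
    also have "\<dots> = (\<Sum>w\<in>W. \<Sum>r\<in>S. f w * (if fst r = i \<and> pend t r = j then M w r * G (snd r) else 0))"
      by (rule sum.swap)
    also have "\<dots> = (\<Sum>w\<in>W. f w * phi n t G (M w) $$ (i, j))"
    proof (rule sum.cong[OF refl])
      fix w assume "w \<in> W"
      then have "supp (M w) \<subseteq> S" by (auto simp: S_def)
      then show "(\<Sum>r\<in>S. f w * (if fst r = i \<and> pend t r = j then M w r * G (snd r) else 0)) =
          f w * phi n t G (M w) $$ (i, j)"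
        by (simp add: phi_entry[OF fS _ ij] sum_distrib_left)
    qed
    also have "\<dots> = mat_eval n f (\<lambda>k. phi n t G (X k)) $$ (i, j)"
      using ij by (simp add: mat_eval_def W_def Mphi)
    finally show "phi n t G (pa_eval n t f X) $$ (i, j) = mat_eval n f (\<lambda>k. phi n t G (X k)) $$ (i, j)" .
  qed (auto simp: mat_eval_def)
  with closed show ?thesis by blast
qed


lemma closure_path:
  assumes q: "quiver n E s t" and pi: "\<forall>p\<in>\<pi>. is_path n E s t p" and p: "p \<in> path_closure t \<pi>"
  shows "is_path n E s t p"
  using p
proof (induction rule: path_closure.induct)
  case (base p) then show ?case using pi by blast
next
  case (step p qq)
  have "is_path n E s t qq" using step pi by blast
  then show ?case using step is_path_append[of n E s t "fst p" "snd p" "snd qq"]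
    by (cases p, cases qq) (auto simp: pconcat_def pstart_def)
qed

lemma multG_one: "multG (\<lambda>_. 1)" by (simp add: multG_def)

lemma phi_zero: "phi n t G (\<lambda>_. 0 :: 'f::field) = 0\<^sub>m n n"
  by (rule eq_matI) (auto simp: phi_def supp_def)

lemma dir1:
  fixes \<pi> :: "'a path set"
  assumes q: "quiver n E s t" and pi: "\<forall>p\<in>\<pi>. is_path n E s t p"
    and f: "f \<in> Id_pa n t (FQ_pi n E s t \<pi> :: ('a path \<Rightarrow> 'f::field) set)"
  shows "f \<in> Id_mat n (A_pi n t \<pi> :: 'f mat set)"
proof -
  have fa: "f \<in> free_alg" using f by (simp add: Id_pa_def)
  have fid: "\<And>X. (\<forall>k. X k \<in> FQ_pi n E s t \<pi>) \<Longrightarrow> pa_eval n t f X = (\<lambda>_. 0 :: 'f)"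
    using f by (simp add: Id_pa_def)
  let ?pc = "path_closure t \<pi>"
  define Pth where "Pth i j = (SOME p. p \<in> ?pc \<and> fst p = i \<and> pend t p = j)" for i j
  define SS where "SS = {(i, j). i < n \<and> j < n \<and> (\<exists>p\<in>?pc. pstart p = i \<and> pend t p = j)}"
  define Img where "Img = (\<lambda>(i, j). Pth i j) ` SS"
  have Pth: "Pth i j \<in> ?pc \<and> fst (Pth i j) = i \<and> pend t (Pth i j) = j" if "(i, j) \<in> SS" for i j
  proof -
    have "\<exists>p. p \<in> ?pc \<and> fst p = i \<and> pend t p = j" using that by (auto simp: SS_def pstart_def)
    then show ?thesis unfolding Pth_def by (rule someI_ex)
  qed
  have fSS: "finite SS" by (rule finite_subset[of _ "{..<n} \<times> {..<n}"]) (auto simp: SS_def)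
  have fImg: "finite Img" using fSS by (simp add: Img_def)
  have Imgpc: "r \<in> ?pc" if "r \<in> Img" for r using that Pth by (auto simp: Img_def)
  show ?thesis unfolding Id_mat_def
  proof (intro CollectI conjI allI impI fa)
    fix B :: "nat \<Rightarrow> 'f mat" assume B: "\<forall>k. B k \<in> A_pi n t \<pi>"
    define X where "X k r = (if r \<in> Img then B k $$ (fst r, pend t r) else 0)" for k r
    have suppX: "supp (X k) \<subseteq> Img" for k by (auto simp: supp_def X_def)
    have XF: "X k \<in> FQ_pi n E s t \<pi>" for k
      unfolding FQ_pi_def
    proof (intro CollectI conjI allI impI)
      show "X k \<in> path_algebra n E s t"
        by (rule pa_memI) (use finite_subset[OF suppX fImg] suppX Imgpc closure_path[OF q pi] in blast)+
      fix p assume "X k p \<noteq> 0"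
      then have "p \<in> supp (X k)" by (simp add: supp_def)
      then show "p \<in> ?pc" using suppX Imgpc by blast
    qed
    then have XP: "\<forall>k. X k \<in> path_algebra n E s t" by (simp add: FQ_pi_def)
    have phiX: "phi n t (\<lambda>_. 1) (X k) = B k" for k
    proof (rule eq_matI)
      have Bk: "B k \<in> carrier_mat n n" using B by (simp add: A_pi_def)
      then show "dim_row (phi n t (\<lambda>_. 1) (X k)) = dim_row (B k)" "dim_col (phi n t (\<lambda>_. 1) (X k)) = dim_col (B k)"
        by auto
      fix i j assume "i < dim_row (B k)" "j < dim_col (B k)"
      then have ij: "i < n" "j < n" using Bk by auto
      have "phi n t (\<lambda>_. 1) (X k) $$ (i, j) = (\<Sum>r\<in>Img. if fst r = i \<and> pend t r = j then X k r * 1 else 0)"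
        by (rule phi_entry[OF fImg suppX ij])
      also have "\<dots> = (\<Sum>r\<in>Img. if r = Pth i j then (if (i, j) \<in> SS then B k $$ (i, j) else 0) else 0)"
      proof (rule sum.cong[OF refl])
        fix r assume "r \<in> Img"
        then obtain i' j' where r: "(i', j') \<in> SS" "r = Pth i' j'" by (auto simp: Img_def)
        show "(if fst r = i \<and> pend t r = j then X k r * 1 else 0) =
            (if r = Pth i j then (if (i, j) \<in> SS then B k $$ (i, j) else 0) else 0)"
          using Pth[OF r(1)] r \<open>r \<in> Img\<close> Pth[of i j] by (auto simp: X_def)
      qed
      also have "\<dots> = (if (i, j) \<in> SS then B k $$ (i, j) else 0)"
        using fImg by (subst sum.delta) (auto simp: Img_def)
      also have "\<dots> = B k $$ (i, j)"
        using B ij by (auto simp: A_pi_def SS_def)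
      finally show "phi n t (\<lambda>_. 1) (X k) $$ (i, j) = B k $$ (i, j)" .
    qed
    have "mat_eval n f B = mat_eval n f (\<lambda>k. phi n t (\<lambda>_. 1) (X k))" using phiX by simp
    also have "\<dots> = phi n t (\<lambda>_. 1) (pa_eval n t f X)"
      using pa_eval_closed_phi[OF q multG_one XP fa] by simp
    also have "\<dots> = 0\<^sub>m n n" using fid[of X] XF phi_zero by simp
    finally show "mat_eval n f B = 0\<^sub>m n n" .
  qed
qed


definition delta :: "'a path \<Rightarrow> 'a path \<Rightarrow> 'f::field" where
  "delta p = (\<lambda>r. if r = p then 1 else 0)"

definition cpath :: "nat \<Rightarrow> 'a set \<Rightarrow> ('a \<Rightarrow> nat) \<Rightarrow> ('a \<Rightarrow> nat) \<Rightarrow> nat \<Rightarrow> 'a list \<Rightarrow> bool" where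
  "cpath n E s t v u \<longleftrightarrow> is_path n E s t (v, u) \<and> pend t (v, u) = v"

lemma cpath_append:
  assumes "cpath n E s t v a" "cpath n E s t v b"
  shows "cpath n E s t v (a @ b)"
  using assms is_path_append[of n E s t v a b] pend_append[of t v a b]
  by (simp add: cpath_def)

lemma cpath_Nil: "v < n \<Longrightarrow> cpath n E s t v []"
  by (simp add: cpath_def is_path_def pend_def)

lemma cpath_replicate:
  assumes "cpath n E s t v a" shows "cpath n E s t v (concat (replicate k a))"
proof (induction k)
  case 0 then show ?case using assms cpath_Nil[of v n] by (simp add: cpath_def is_path_def)
next
  case (Suc k) then show ?case using cpath_append[OF assms] by simp
qed

lemma delta_mult:
  fixes y :: "'a path \<Rightarrow> 'f::field"
  assumes "pend t (v, u) = v"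
  shows "pa_mult t (delta (v, u)) y r =
     (if fst r = v \<and> take (length u) (snd r) = u then y (v, drop (length u) (snd r)) else 0)"
proof -
  have "pa_mult t (delta (v, u)) y r = (\<Sum>k\<in>{0..length (snd r)}.
      if k = length u then (if fst r = v \<and> take (length u) (snd r) = u then y (v, drop (length u) (snd r)) else 0) else 0)"
    unfolding pa_mult_def
  proof (rule sum.cong[OF refl])
    fix k assume k: "k \<in> {0..length (snd r)}"
    show "delta (v, u) (fst r, take k (snd r)) * y (pend t (fst r, take k (snd r)), drop k (snd r)) =
      (if k = length u then (if fst r = v \<and> take (length u) (snd r) = u then y (v, drop (length u) (snd r)) else 0) else 0)"
      using k assms by (auto simp: delta_def)
  qed
  also have "\<dots> = (if fst r = v \<and> take (length u) (snd r) = u then y (v, drop (length u) (snd r)) else 0)"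
    by (subst sum.delta) (auto dest: arg_cong[where f=length])
  finally show ?thesis .
qed

lemma take_drop_Nil_iff: "(take (length u) xs = u \<and> drop (length u) xs = []) \<longleftrightarrow> xs = u"
  by (metis append_Nil2 append_take_drop_id drop_all order_refl take_all_iff)

lemma foldr_delta:
  assumes v: "v < n" and ws: "ws \<noteq> []" and c: "\<forall>u\<in>set ws. pend t (v, u) = v"
  shows "foldr (pa_mult t) (map (\<lambda>u. delta (v, u)) ws) (pa_one n) = (delta (v, concat ws) :: 'a path \<Rightarrow> 'f::field)"
  using ws c
proof (induction ws)
  case Nil then show ?case by simp
next
  case (Cons u ws)
  have pu: "pend t (v, u) = v" using Cons.prems by simp
  show ?case
  proof (cases "ws = []")
    case True
    show ?thesis
    proof
      fix r :: "'a path"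
      have e: "foldr (pa_mult t) (map (\<lambda>u. delta (v, u)) (u # ws)) (pa_one n) = pa_mult t (delta (v, u)) (pa_one n)"
        using True by simp
      show "foldr (pa_mult t) (map (\<lambda>u. delta (v, u)) (u # ws)) (pa_one n) r = (delta (v, concat (u # ws)) :: 'a path \<Rightarrow> 'f) r"
        unfolding e delta_mult[OF pu] using True v
        by (cases r) (auto simp: pa_one_def delta_def take_drop_Nil_iff)
    qed
  next
    case False
    have IH: "foldr (pa_mult t) (map (\<lambda>u. delta (v, u)) ws) (pa_one n) = (delta (v, concat ws) :: 'a path \<Rightarrow> 'f)"
      using Cons False by simp
    show ?thesis
    proof
      fix r :: "'a path"
      show "foldr (pa_mult t) (map (\<lambda>u. delta (v, u)) (u # ws)) (pa_one n) r = (delta (v, concat (u # ws)) :: 'a path \<Rightarrow> 'f) r"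
        unfolding list.map foldr.simps o_apply IH delta_mult[OF pu]
        by (cases r) (auto simp: delta_def append_eq_conv_conj, metis append_take_drop_id)
    qed
  qed
qed


definition code :: "'a list \<Rightarrow> 'a list \<Rightarrow> nat \<Rightarrow> 'a list" where
  "code \<alpha> \<beta> k = concat (replicate k \<alpha>) @ \<beta>"

lemma code_head:
  assumes len: "length \<alpha> = length \<beta>" and ne: "\<alpha> \<noteq> \<beta>"
  shows "code \<alpha> \<beta> k1 @ R1 = code \<alpha> \<beta> k2 @ R2 \<Longrightarrow> k1 = k2"
proof (induction k1 arbitrary: k2)
  case 0
  show ?case
  proof (cases k2)
    case (Suc k2')
    then have "\<beta> @ R1 = \<alpha> @ (code \<alpha> \<beta> k2' @ R2)" using 0 by (simp add: code_def)
    then have "\<beta> = \<alpha>" using len by (metis append_eq_append_conv)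
    then show ?thesis using ne by simp
  qed simp
next
  case (Suc k1)
  show ?case
  proof (cases k2)
    case 0
    then have "\<alpha> @ (code \<alpha> \<beta> k1 @ R1) = \<beta> @ R2" using Suc.prems by (simp add: code_def)
    then have "\<beta> = \<alpha>" using len by (metis append_eq_append_conv)
    then show ?thesis using ne by simp
  next
    case (Suc k2')
    then have "\<alpha> @ (code \<alpha> \<beta> k1 @ R1) = \<alpha> @ (code \<alpha> \<beta> k2' @ R2)" using Suc.prems by (simp add: code_def)
    then show ?thesis using Suc.IH Suc by simp
  qed
qed

lemma code_ne:
  assumes len: "length \<alpha> = length \<beta>" and ne: "\<alpha> \<noteq> \<beta>"
  shows "code \<alpha> \<beta> k \<noteq> []"
  using assms by (auto simp: code_def)

lemma code_inj:
  assumes len: "length \<alpha> = length \<beta>" and ne: "\<alpha> \<noteq> \<beta>"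
  shows "concat (map (code \<alpha> \<beta>) w1) = concat (map (code \<alpha> \<beta>) w2) \<Longrightarrow> w1 = w2"
proof (induction w1 arbitrary: w2)
  case Nil
  then show ?case using code_ne[OF assms] by (cases w2) auto
next
  case (Cons k1 w1)
  then obtain k2 w2' where w2: "w2 = k2 # w2'" using code_ne[OF assms] by (cases w2) auto
  have e: "code \<alpha> \<beta> k1 @ concat (map (code \<alpha> \<beta>) w1) = code \<alpha> \<beta> k2 @ concat (map (code \<alpha> \<beta>) w2')"
    using Cons.prems w2 by simp
  have "k1 = k2" by (rule code_head[OF assms e])
  then show ?case using e Cons.IH w2 by simp
qed

lemma nonPI:
  fixes f :: "nat list \<Rightarrow> 'f::field"
  assumes q: "quiver n E s t" and cu: "cpath n E s t v u" and cw: "cpath n E s t v w"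
    and nc: "u @ w \<noteq> w @ u"
    and f: "f \<in> Id_pa n t (path_algebra n E s t :: ('a path \<Rightarrow> 'f) set)"
  shows "f = (\<lambda>_. 0)"
proof (rule ccontr)
  assume "f \<noteq> (\<lambda>_. 0)"
  then obtain w0 where w0: "f w0 \<noteq> 0" by auto
  define \<alpha> where "\<alpha> = u @ w"
  define \<beta> where "\<beta> = w @ u"
  have len: "length \<alpha> = length \<beta>" and ne: "\<alpha> \<noteq> \<beta>" using nc by (auto simp: \<alpha>_def \<beta>_def)
  have ca: "cpath n E s t v \<alpha>" and cb: "cpath n E s t v \<beta>"
    using cpath_append cu cw by (auto simp: \<alpha>_def \<beta>_def)
  have vn: "v < n" using cu by (simp add: cpath_def is_path_def)
  have cc: "cpath n E s t v (code \<alpha> \<beta> k)" for k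
    unfolding code_def by (rule cpath_append[OF cpath_replicate[OF ca] cb])
  define X :: "nat \<Rightarrow> 'a path \<Rightarrow> 'f" where "X k = delta (v, code \<alpha> \<beta> k)" for k
  have XP: "X k \<in> path_algebra n E s t" for k
  proof (rule pa_memI)
    have "supp (X k) = {(v, code \<alpha> \<beta> k)}" by (auto simp: supp_def X_def delta_def)
    then show "finite (supp (X k))" by simp
    fix p assume "p \<in> supp (X k)"
    then have "p = (v, code \<alpha> \<beta> k)" by (auto simp: supp_def X_def delta_def split: if_splits)
    then show "is_path n E s t p" using cc by (simp add: cpath_def)
  qed
  have fa: "f \<in> free_alg" and ev0: "pa_eval n t f X = (\<lambda>_. 0)" using f XP by (auto simp: Id_pa_def)
  define r0 where "r0 = (v, concat (map (code \<alpha> \<beta>) w0))"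
  have trm: "foldr (pa_mult t) (map X w') (pa_one n) r0 = (if w' = w0 then 1 else 0)" for w'
  proof (cases "w' = []")
    case True
    have "concat (map (code \<alpha> \<beta>) w0) = [] \<longleftrightarrow> w0 = []" using code_ne[OF len ne] by auto
    then show ?thesis using True vn by (auto simp: pa_one_def r0_def)
  next
    case False
    have mX: "map X w' = map (\<lambda>u. delta (v, u)) (map (code \<alpha> \<beta>) w')" by (simp add: X_def)
    have "foldr (pa_mult t) (map X w') (pa_one n) = (delta (v, concat (map (code \<alpha> \<beta>) w')) :: 'a path \<Rightarrow> 'f)"
      unfolding mX by (rule foldr_delta[OF vn]) (use False cc in \<open>auto simp: cpath_def\<close>)
    then show ?thesis using code_inj[OF len ne, of w' w0] by (auto simp: delta_def r0_def)
  qed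
  have "pa_eval n t f X r0 = (\<Sum>w'\<in>{w. f w \<noteq> 0}. f w' * (if w' = w0 then 1 else 0))"
    by (simp add: pa_eval_def trm)
  also have "\<dots> = f w0"
    using fa w0 by (simp add: free_alg_def if_distrib cong: if_cong)
  finally show False using ev0 w0 by simp
qed


lemma path_unique:
  assumes q: "quiver n E s t"
    and NC: "\<forall>v u w. cpath n E s t v u \<and> cpath n E s t v w \<longrightarrow> u @ w = w @ u"
  shows "is_path n E s t (i, xs) \<Longrightarrow> is_path n E s t (i, ys) \<Longrightarrow> pend t (i, xs) = pend t (i, ys) \<Longrightarrow>
         mset xs = mset ys \<Longrightarrow> xs = ys"
proof (induction xs arbitrary: i ys)
  case Nil then show ?case by simp
next
  case (Cons a as)
  obtain b bs where ys: "ys = b # bs" using Cons.prems(4) by (cases ys) auto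
  show ?case
  proof (cases "a = b")
    case True
    have m: "mset as = mset bs" using Cons.prems(4) ys True by simp
    have pa: "is_path n E s t (t a, as)"
      using is_path_suffix[of n E s t i "[a]" as] Cons.prems(1) q by (simp add: pend_def)
    have pb: "is_path n E s t (t a, bs)"
      using is_path_suffix[of n E s t i "[b]" bs] Cons.prems(2) q ys True by (simp add: pend_def)
    have "pend t (t a, as) = pend t (t a, bs)"
      using Cons.prems(3) ys True pend_append[of t i "[a]" as] pend_append[of t i "[a]" bs] by (simp add: pend_def)
    then show ?thesis using Cons.IH[OF pa pb _ m] ys True by simp
  next
    case False
    have "a \<in> set bs" using Cons.prems(4) ys False by (metis list.set_intros(1) mset_eq_setD set_ConsD)
    then obtain bs1 bs2 where bs: "bs = bs1 @ a # bs2" by (meson split_list)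
    have "b \<in> set as" using Cons.prems(4) ys False by (metis list.set_intros(1) mset_eq_setD set_ConsD)
    then obtain as1 as2 where as: "as = as1 @ b # as2" by (meson split_list)
    have sa: "s a = i" using Cons.prems(1) by (simp add: is_path_def)
    have sb: "s b = i" using Cons.prems(2) ys by (simp add: is_path_def)
    have p1: "is_path n E s t (i, (b # bs1) @ a # bs2)" using Cons.prems(2) ys bs by simp
    have p2: "is_path n E s t (i, (a # as1) @ b # as2)" using Cons.prems(1) as by simp
    have c1: "cpath n E s t i (b # bs1)"
      using is_path_prefix[OF p1] is_path_link[OF p1] sa by (simp add: cpath_def)
    have c2: "cpath n E s t i (a # as1)"
      using is_path_prefix[OF p2] is_path_link[OF p2] sb by (simp add: cpath_def)
    have "(b # bs1) @ (a # as1) = (a # as1) @ (b # bs1)" using NC c1 c2 by blast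
    then show ?thesis using False by simp
  qed
qed

lemma digits_bound:
  fixes B :: nat
  assumes "\<forall>i<m. d i < B"
  shows "(\<Sum>i<m. d i * B ^ i) < B ^ m"
  using assms
proof (induction m)
  case 0 then show ?case by simp
next
  case (Suc m)
  have "(\<Sum>i<Suc m. d i * B ^ i) = (\<Sum>i<m. d i * B ^ i) + d m * B ^ m" by simp
  also have "\<dots> < B ^ m + d m * B ^ m" using Suc by simp
  also have "\<dots> = (d m + 1) * B ^ m" by simp
  also have "\<dots> \<le> B * B ^ m" using Suc.prems by (intro mult_right_mono) auto
  finally show ?case by simp
qed

lemma digits_unique:
  fixes B :: nat
  assumes "\<forall>i<m. d i < B" "\<forall>i<m. e i < B" "(\<Sum>i<m. d i * B ^ i) = (\<Sum>i<m. e i * B ^ i)"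
  shows "\<forall>i<m. d i = e i"
  using assms
proof (induction m)
  case 0 then show ?case by simp
next
  case (Suc m)
  have Bp: "B > 0" using Suc.prems(1) by auto
  then have Bm: "B ^ m > 0" by simp
  have ld: "(\<Sum>i<m. d i * B ^ i) < B ^ m" using digits_bound Suc.prems(1) by simp
  have le: "(\<Sum>i<m. e i * B ^ i) < B ^ m" using digits_bound Suc.prems(2) by simp
  have eq: "(\<Sum>i<m. d i * B ^ i) + d m * B ^ m = (\<Sum>i<m. e i * B ^ i) + e m * B ^ m"
    using Suc.prems(3) by simp
  have "((\<Sum>i<m. d i * B ^ i) + d m * B ^ m) div B ^ m = d m"
    using ld Bm by (simp add: div_mult_self1)
  moreover have "((\<Sum>i<m. e i * B ^ i) + e m * B ^ m) div B ^ m = e m"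
    using le Bm by (simp add: div_mult_self1)
  ultimately have dm: "d m = e m" using eq by simp
  then have "(\<Sum>i<m. d i * B ^ i) = (\<Sum>i<m. e i * B ^ i)" using eq by simp
  moreover have "\<forall>i<m. d i < B" "\<forall>i<m. e i < B" using Suc.prems(1,2) by auto
  ultimately have IH: "\<forall>i<m. d i = e i" using Suc.IH by blast
  show ?case
  proof (intro allI impI)
    fix i assume "i < Suc m"
    then show "d i = e i" using IH dm by (cases "i = m") auto
  qed
qed

definition deg :: "'a list \<Rightarrow> nat \<Rightarrow> 'a list \<Rightarrow> nat" where
  "deg es B xs = (\<Sum>i<length es. count_list xs (es ! i) * B ^ i)"

lemma deg_append: "deg es B (xs @ ys) = deg es B xs + deg es B ys"
  by (simp add: deg_def sum.distrib algebra_simps)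

lemma multG_deg: "multG (\<lambda>xs. (l::'f::field) ^ deg es B xs)"
proof -
  have "deg es B [] = 0" by (simp add: deg_def)
  then show ?thesis by (simp add: multG_def deg_append power_add)
qed

lemma deg_inj:
  assumes es: "set es = E" and "set xs \<subseteq> E" "set ys \<subseteq> E" "length xs < B" "length ys < B"
    and "deg es B xs = deg es B ys"
  shows "mset xs = mset ys"
proof (rule multiset_eqI)
  fix a
  have "\<forall>i<length es. count_list xs (es ! i) = count_list ys (es ! i)"
  proof (rule digits_unique)
    show "\<forall>i<length es. count_list xs (es ! i) < B" using le_less_trans[OF count_le_length assms(4)] by blast
    show "\<forall>i<length es. count_list ys (es ! i) < B" using le_less_trans[OF count_le_length assms(5)] by blast
  qed (use assms in \<open>simp add: deg_def\<close>)
  then show "count (mset xs) a = count (mset ys) a"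
  proof (cases "a \<in> E")
    case True
    then obtain i where "i < length es" "es ! i = a" using es by (auto simp: in_set_conv_nth)
    then show ?thesis using \<open>\<forall>i<length es. _\<close> by (auto simp: count_mset)
  next
    case False
    then have "a \<notin> set xs" "a \<notin> set ys" using assms by auto
    then show ?thesis by (simp add: count_mset)
  qed
qed


lemma phi_in_A:
  fixes x :: "'a path \<Rightarrow> 'f::field"
  assumes x: "x \<in> FQ_pi n E s t \<pi>"
  shows "phi n t G x \<in> A_pi n t \<pi>"
  unfolding A_pi_def
proof (intro CollectI conjI allI impI)
  show "phi n t G x \<in> carrier_mat n n" by simp
  fix i j assume ij: "i < n" "j < n" and no: "\<not> (\<exists>p\<in>path_closure t \<pi>. pstart p = i \<and> pend t p = j)"
  have "\<And>p. p \<in> supp x \<Longrightarrow> p \<in> path_closure t \<pi>" using x by (auto simp: FQ_pi_def supp_def)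
  then have "(\<Sum>p\<in>supp x. if fst p = i \<and> pend t p = j then x p * G (snd p) else 0) = 0"
    using no by (intro sum.neutral) (auto simp: pstart_def)
  then show "phi n t G x $$ (i, j) = 0" using ij by (simp add: phi_def)
qed

lemma dir2:
  fixes \<pi> :: "'a path set"
  assumes q: "quiver n E s t" and pi: "\<forall>p\<in>\<pi>. is_path n E s t p"
    and NC: "\<forall>v u w. cpath n E s t v u \<and> cpath n E s t v w \<longrightarrow> u @ w = w @ u"
    and f: "f \<in> Id_mat n (A_pi n t \<pi> :: 'f::field_char_0 mat set)"
  shows "f \<in> Id_pa n t (FQ_pi n E s t \<pi> :: ('a path \<Rightarrow> 'f) set)"
proof -
  have fa: "f \<in> free_alg" using f by (simp add: Id_mat_def)
  have fid: "\<And>B. (\<forall>k. B k \<in> A_pi n t \<pi>) \<Longrightarrow> mat_eval n f B = (0\<^sub>m n n :: 'f mat)"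
    using f by (simp add: Id_mat_def)
  show ?thesis unfolding Id_pa_def
  proof (intro CollectI conjI allI impI fa)
    fix X :: "nat \<Rightarrow> 'a path \<Rightarrow> 'f" assume XF: "\<forall>k. X k \<in> FQ_pi n E s t \<pi>"
    then have XP: "\<forall>k. X k \<in> path_algebra n E s t" by (simp add: FQ_pi_def)
    define Y where "Y = pa_eval n t f X"
    have YP: "Y \<in> path_algebra n E s t" using pa_eval_closed_phi[OF q multG_one XP fa] by (simp add: Y_def)
    have fY: "finite (supp Y)" using pa_memD(1)[OF YP] .
    have phiY: "phi n t G Y = 0\<^sub>m n n" if G: "multG G" for G
    proof -
      have "phi n t G Y = mat_eval n f (\<lambda>k. phi n t G (X k))"
        using pa_eval_closed_phi[OF q G XP fa] by (simp add: Y_def)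
      also have "\<dots> = 0\<^sub>m n n" by (rule fid) (use XF phi_in_A in blast)
      finally show ?thesis .
    qed
    obtain es where es: "set es = E" using finite_distinct_list q by (auto simp: quiver_def)
    define B where "B = Suc (\<Sum>r\<in>supp Y. length (snd r))"
    have lenB: "length (snd r) < B" if "r \<in> supp Y" for r
      using member_le_sum[OF _ _ fY, of r "\<lambda>r. length (snd r)"] that by (simp add: B_def)
    show "Y = (\<lambda>_. 0)"
    proof (rule ccontr)
      assume "Y \<noteq> (\<lambda>_. 0)"
      have "\<exists>r0. Y r0 \<noteq> 0"
      proof (rule ccontr)
        assume "\<not> (\<exists>r0. Y r0 \<noteq> 0)"
        then have "Y = (\<lambda>_. 0)" by auto
        with \<open>Y \<noteq> (\<lambda>_. 0)\<close> show False by simp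
      qed
      then obtain r0 where r0: "Y r0 \<noteq> 0" by blast
      then have r0s: "r0 \<in> supp Y" by (simp add: supp_def)
      have r0p: "is_path n E s t r0" using pa_memD(2)[OF YP r0s] .
      define i where "i = fst r0"
      define j where "j = pend t r0"
      have ij: "i < n" "j < n" using r0p pend_lt[OF r0p q] by (auto simp: i_def j_def is_path_def)
      define P where "P = (\<Sum>r\<in>supp Y. if fst r = i \<and> pend t r = j then monom (Y r) (deg es B (snd r)) else 0)"
      have "poly P l = 0" for l
      proof -
        have "poly P l = (\<Sum>r\<in>supp Y. if fst r = i \<and> pend t r = j then Y r * l ^ deg es B (snd r) else 0)"
          unfolding P_def poly_sum by (intro sum.cong refl) (simp add: poly_monom)
        also have "\<dots> = phi n t (\<lambda>xs. l ^ deg es B xs) Y $$ (i, j)"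
          using ij by (simp add: phi_def)
        also have "\<dots> = 0" using phiY[OF multG_deg] ij by simp
        finally show ?thesis .
      qed
      then have P0: "P = 0" using poly_all_0_iff_0 by blast
      have "coeff P (deg es B (snd r0)) = (\<Sum>r\<in>supp Y. if r = r0 then Y r0 else 0)"
        unfolding P_def coeff_sum
      proof (rule sum.cong[OF refl])
        fix r assume rs: "r \<in> supp Y"
        have rp: "is_path n E s t r" using pa_memD(2)[OF YP rs] .
        have eqr: "r = r0" if "fst r = i" "pend t r = j" "deg es B (snd r) = deg es B (snd r0)"
        proof -
          have m: "mset (snd r) = mset (snd r0)"
            by (rule deg_inj[OF es]) (use rp r0p lenB[OF rs] lenB[OF r0s] that in \<open>auto simp: is_path_def\<close>)
          have "snd r = snd r0"
            by (rule path_unique[OF q NC, of i]) (use rp r0p that m in \<open>auto simp: i_def j_def\<close>; metis prod.collapse)+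
          then show ?thesis using that(1) by (simp add: i_def prod_eq_iff)
        qed
        show "coeff (if fst r = i \<and> pend t r = j then monom (Y r) (deg es B (snd r)) else 0) (deg es B (snd r0)) =
            (if r = r0 then Y r0 else 0)"
          using eqr by (auto simp: coeff_monom i_def j_def)
      qed
      also have "\<dots> = Y r0" using fY r0s by (simp add: sum.delta)
      finally have "Y r0 = 0" using P0 by simp
      then show False using r0 by simp
    qed
  qed
qed

lemma zero_in_Id: "(\<lambda>_. 0) \<in> Id_pa n t B"
  by (simp add: Id_pa_def free_alg_def pa_eval_def)

theorem theorem1:
  fixes n :: nat and E :: "'a set" and s t :: "'a \<Rightarrow> nat"
    and \<pi> :: "'a path set"
  assumes "quiver n E s t"
    and "Id_pa n t (path_algebra n E s t :: ('a path \<Rightarrow> 'f::field_char_0) set) \<noteq> {\<lambda>_. 0}"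
    and "\<forall>p\<in>\<pi>. is_path n E s t p"
  shows "Id_pa n t (FQ_pi n E s t \<pi> :: ('a path \<Rightarrow> 'f) set) = Id_mat n (A_pi n t \<pi>)"
proof -
  obtain g where g: "g \<in> Id_pa n t (path_algebra n E s t :: ('a path \<Rightarrow> 'f) set)" "g \<noteq> (\<lambda>_. 0)"
    using assms(2) zero_in_Id by blast
  have NC: "\<forall>v u w. cpath n E s t v u \<and> cpath n E s t v w \<longrightarrow> u @ w = w @ u"
    using nonPI[OF assms(1) _ _ _ g(1)] g(2) by blast
  show ?thesis
    using dir1[OF assms(1) assms(3)] dir2[OF assms(1) assms(3) NC] by blast
qed

end
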